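(* Consider the equation $x'(t)+p(t)\,x(\tau(t))=0$, $t\ge t_0$, where $p,\tau:[t_0,\infty)\to[0,\infty)$ are continuous, $\tau(t)\le t$ and $\lim_{t\to\infty}\tau(t)=\infty$. Let $\sigma:[t_0,\infty)\to\mathbb{R}$ be continuous and non-decreasing with $\tau(t)\le\sigma(t)\le t$ for $t\ge t_0$. If $$\limsup_{t\to+\infty}\int_{\sigma(t)}^{t}p(s)\exp\Bigg(\int_{\tau(s)}^{\sigma(t)}p(\xi)\exp\bigg(\int_{\tau(\xi)}^{\xi}p(u)\,du\bigg)d\xi\Bigg)ds>1,$$ then all solutions of this equation oscillate.
   Context: A solution is a function $x\in C([T_0,\infty);\mathbb{R})$ for some $T_0\ge t_0$, continuously differentiable on $[\tau_{(-1)}(T_0),\infty)$ where $\tau_{(-1)}(t)=\sup\{s:\tau(s)\le t\}$, satisfying the equation for $t\ge\tau_{(-1)}(T_0)$. It is oscillatory if it has arbitrarily large zeros; "all solutions oscillate" means every solution is oscillatory. *)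

theory Defs
  imports "HOL-Analysis.Analysis"
begin

definition tau_inv :: "real \<Rightarrow> (real \<Rightarrow> real) \<Rightarrow> real \<Rightarrow> real" where
  "tau_inv t0 tau T = Sup {s. t0 \<le> s \<and> tau s \<le> T}"

definition is_solution :: "real \<Rightarrow> (real \<Rightarrow> real) \<Rightarrow> (real \<Rightarrow> real) \<Rightarrow> (real \<Rightarrow> real) \<Rightarrow> bool" where
  "is_solution t0 p tau x \<longleftrightarrow>
     (\<exists>T0 \<ge> t0. continuous_on {T0..} x \<and>
        (\<exists>x'. continuous_on {tau_inv t0 tau T0..} x' \<and>
           (\<forall>t \<ge> tau_inv t0 tau T0.
               (x has_real_derivative x' t) (at t within {tau_inv t0 tau T0..}) \<and>
               x' t + p t * x (tau t) = 0)))"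

definition oscillatory :: "(real \<Rightarrow> real) \<Rightarrow> bool" where
  "oscillatory x \<longleftrightarrow> (\<forall>T. \<exists>t > T. x t = 0)"

end

theory Submission imports Defs begin

lemma deriv_integral:
  fixes f :: "real \<Rightarrow> real"
  assumes "continuous_on {c..} f" "c < u"
  shows "DERIV (\<lambda>v. integral {c..v} f) u :> f u"
proof -
  have "continuous_on {c..u+1} f" using assms(1) by (rule continuous_on_subset) auto
  from integral_has_vector_derivative[OF this, of u] assms(2)
  have "((\<lambda>v. integral {c..v} f) has_vector_derivative f u) (at u within {c..u+1})" by auto
  moreover have "at u within {c..u+1} = at u" using assms(2) by (intro at_within_Icc_at) auto
  ultimately show ?thesis by (simp add: has_real_derivative_iff_has_vector_derivative)
qed

lemma cont_integral:
  fixes f :: "real \<Rightarrow> real"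
  assumes "continuous_on {c..} f" "c < d"
  shows "continuous_on {d..} (\<lambda>v. integral {c..v} f)"
  using deriv_integral[OF assms(1)] assms(2)
  by (intro continuous_at_imp_continuous_on) (meson DERIV_isCont less_le_trans atLeast_iff)

lemma integral_diff:
  fixes f :: "real \<Rightarrow> real"
  assumes "continuous_on {c..} f" "c \<le> a" "a \<le> b"
  shows "integral {a..b} f = integral {c..b} f - integral {c..a} f"
proof -
  have "f integrable_on {c..b}"
    by (rule integrable_continuous_interval, rule continuous_on_subset[OF assms(1)]) auto
  from Henstock_Kurzweil_Integration.integral_combine[OF assms(2,3) this] show ?thesis by simp
qed

lemma lvl:
  fixes tau :: "real \<Rightarrow> real"
  assumes "filterlim tau at_top at_top"
  shows "\<exists>N \<ge> m. \<forall>t\<ge>N. c \<le> tau t"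
proof -
  have "eventually (\<lambda>t. c \<le> tau t) at_top" using assms by (simp add: filterlim_at_top)
  then obtain N where "\<forall>t\<ge>N. c \<le> tau t" by (auto simp: eventually_at_top_linorder)
  then show ?thesis by (intro exI[of _ "max N m"]) auto
qed

lemma main_pos:
  fixes t0 :: real and p tau sigma x x' :: "real \<Rightarrow> real"
  assumes p_cont: "continuous_on {t0..} p"
    and p_nonneg: "\<And>t. t \<ge> t0 \<Longrightarrow> p t \<ge> 0"
    and tau_cont: "continuous_on {t0..} tau"
    and tau_le: "\<And>t. t \<ge> t0 \<Longrightarrow> tau t \<le> t"
    and tau_lim: "filterlim tau at_top at_top"
    and sigma_mono: "mono_on {t0..} sigma"
    and sigma_bounds: "\<And>t. t \<ge> t0 \<Longrightarrow> tau t \<le> sigma t \<and> sigma t \<le> t"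
    and cond: "Limsup at_top (\<lambda>t. ereal (integral {sigma t..t}
                 (\<lambda>s. p s * exp (integral {tau s..sigma t}
                    (\<lambda>\<xi>. p \<xi> * exp (integral {tau \<xi>..\<xi>} p)))))) > 1"
    and xpos: "\<And>t. t \<ge> S \<Longrightarrow> x t > 0"
    and xder: "\<And>t. t \<ge> A \<Longrightarrow> (x has_real_derivative x' t) (at t within {A..}) \<and> x' t + p t * x (tau t) = 0"
  shows False
proof -
  define a where "a = max (max A S) t0 + 1"
  have a_facts: "a > A" "a > S" "a > t0" unfolding a_def by auto
  have D: "DERIV x t :> x' t" "x' t = - p t * x (tau t)" "x t > 0" "p t \<ge> 0" if "t \<ge> a" for t
  proof -
    have "at t within {A..} = at t"
      using that a_facts by (intro at_within_open_subset[where S="{A<..}"]) auto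
    then show "DERIV x t :> x' t" using xder[of t] that a_facts by auto
    show "x' t = - p t * x (tau t)" using xder[of t] that a_facts by (auto simp: algebra_simps)
    show "x t > 0" "p t \<ge> 0" using xpos p_nonneg that a_facts by auto
  qed
  obtain B where B: "B \<ge> a" "\<And>t. t \<ge> B \<Longrightarrow> tau t \<ge> a" using lvl[OF tau_lim] by blast
  have dec: "x v \<le> x u" if "B \<le> u" "u \<le> v" for u v
  proof (rule DERIV_nonpos_imp_nonincreasing[of u v x, OF that(2)])
    fix w assume w: "u \<le> w" "w \<le> v"
    then have "w \<ge> a" "tau w \<ge> a" using that B by auto
    then have "x' w \<le> 0" using D[of w] D[of "tau w"] by (auto intro: mult_nonneg_nonneg)
    then show "\<exists>y. DERIV x w :> y \<and> y \<le> 0" using D(1)[OF \<open>w \<ge> a\<close>] by blast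
  qed
  obtain B2 where B2: "B2 \<ge> B + 1" "\<And>t. t \<ge> B2 \<Longrightarrow> tau t \<ge> B" using lvl[OF tau_lim] by blast
  have ratio1: "x u \<le> x (tau u)" if "u \<ge> B2" for u
    using dec[of "tau u" u] B2 that B a_facts tau_le[of u] by auto
  obtain B3 where B3: "B3 \<ge> B2 + 1" "\<And>t. t \<ge> B3 \<Longrightarrow> tau t \<ge> B2" using lvl[OF tau_lim] by blast
  define F where "F u = integral {t0..u} p" for u
  have Fder: "DERIV F u :> p u" if "u > t0" for u
    unfolding F_def using deriv_integral[OF p_cont that] .
  have step2: "x \<xi> * exp (integral {tau \<xi>..\<xi>} p) \<le> x (tau \<xi>)" if "\<xi> \<ge> B3" for \<xi>
  proof -
    define h where "h u = x u * exp (F u)" for u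
    have "h \<xi> \<le> h (tau \<xi>)"
    proof (rule DERIV_nonpos_imp_nonincreasing[of "tau \<xi>" \<xi> h])
      show "tau \<xi> \<le> \<xi>" using tau_le[of \<xi>] that B3 B2 B a_facts by auto
      fix w assume w: "tau \<xi> \<le> w" "w \<le> \<xi>"
      then have wB2: "w \<ge> B2" using B3 that by force
      then have wa: "w \<ge> a" "w > t0" using B2 B a_facts by auto
      have "DERIV (\<lambda>u. exp (F u)) w :> exp (F w) * p w"
        using DERIV_chain2[OF DERIV_exp Fder[OF wa(2)]] .
      from DERIV_mult[OF D(1)[OF wa(1)] this]
      have "DERIV h w :> x' w * exp (F w) + x w * (exp (F w) * p w)"
        unfolding h_def by (simp add: algebra_simps)
      moreover have "x' w * exp (F w) + x w * (exp (F w) * p w) = exp (F w) * p w * (x w - x (tau w))"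
        using D(2)[OF wa(1)] by (simp add: algebra_simps)
      moreover have "exp (F w) * p w * (x w - x (tau w)) \<le> 0"
        using ratio1[OF wB2] D(4)[OF wa(1)]
        by (intro mult_nonneg_nonpos) auto
      ultimately show "\<exists>y. DERIV h w :> y \<and> y \<le> 0" by auto
    qed
    moreover have "integral {tau \<xi>..\<xi>} p = F \<xi> - F (tau \<xi>)"
      unfolding F_def using integral_diff[OF p_cont, of "tau \<xi>" \<xi>] that B3 B2 B a_facts tau_le[of \<xi>]
      by force
    ultimately have "(x \<xi> * exp (integral {tau \<xi>..\<xi>} p)) * exp (F (tau \<xi>)) \<le> x (tau \<xi>) * exp (F (tau \<xi>))"
      unfolding h_def by (simp add: exp_diff mult.assoc)
    then show ?thesis by (simp add: mult_le_cancel_right)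
  qed
  define q where "q \<xi> = p \<xi> * exp (integral {tau \<xi>..\<xi>} p)" for \<xi>
  have Fcont: "continuous_on {a..} F" unfolding F_def using cont_integral[OF p_cont a_facts(3)] .
  have tauB: "continuous_on {B..} tau" using tau_cont by (rule continuous_on_subset) (use B a_facts in auto)
  have FtauB: "continuous_on {B..} (\<lambda>u. F (tau u))"
    by (rule continuous_on_compose2[OF Fcont tauB]) (use B in auto)
  have FB: "continuous_on {B..} F" using Fcont by (rule continuous_on_subset) (use B in auto)
  have pB: "continuous_on {B..} p" using p_cont by (rule continuous_on_subset) (use B a_facts in auto)
  have "continuous_on {B..} (\<lambda>\<xi>. p \<xi> * exp (F \<xi> - F (tau \<xi>)))"
    by (intro continuous_intros pB FB FtauB)
  moreover have "p \<xi> * exp (F \<xi> - F (tau \<xi>)) = q \<xi>" if "\<xi> \<in> {B..}" for \<xi>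
  proof -
    have "integral {tau \<xi>..\<xi>} p = F \<xi> - F (tau \<xi>)"
      unfolding F_def using integral_diff[OF p_cont, of "tau \<xi>" \<xi>] that B a_facts tau_le[of \<xi>]
      by force
    then show ?thesis unfolding q_def by simp
  qed
  ultimately have qcont: "continuous_on {B..} q" using continuous_on_cong[of "{B..}" "{B..}" "\<lambda>\<xi>. p \<xi> * exp (F \<xi> - F (tau \<xi>))" q] by auto
  define G where "G u = integral {B..u} q" for u
  have Gder: "DERIV G u :> q u" if "u > B" for u unfolding G_def using deriv_integral[OF qcont that] .
  have Gcont: "continuous_on {B2..} G" unfolding G_def by (rule cont_integral[OF qcont]) (use B2 in auto)
  have step3: "x v * exp (G v) \<le> x u * exp (G u)" if "B3 \<le> u" "u \<le> v" for u v
  proof (rule DERIV_nonpos_imp_nonincreasing[of u v "\<lambda>w. x w * exp (G w)", OF that(2)])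
    fix w assume w: "u \<le> w" "w \<le> v"
    then have wa: "w \<ge> a" "w > B" "w \<ge> B3" using that B3 B2 B by auto
    have "DERIV (\<lambda>u. exp (G u)) w :> exp (G w) * q w"
      using DERIV_chain2[OF DERIV_exp Gder[OF wa(2)]] .
    from DERIV_mult[OF D(1)[OF wa(1)] this]
    have "DERIV (\<lambda>w. x w * exp (G w)) w :> x' w * exp (G w) + x w * (exp (G w) * q w)"
      by (simp add: algebra_simps)
    moreover have "x' w * exp (G w) + x w * (exp (G w) * q w)
       = exp (G w) * p w * (x w * exp (integral {tau w..w} p) - x (tau w))"
      using D(2)[OF wa(1)] unfolding q_def by (simp add: algebra_simps)
    moreover have "exp (G w) * p w * (x w * exp (integral {tau w..w} p) - x (tau w)) \<le> 0"
      using step2[OF wa(3)] D(4)[OF wa(1)]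
      by (intro mult_nonneg_nonpos) auto
    ultimately show "\<exists>y. DERIV (\<lambda>w. x w * exp (G w)) w :> y \<and> y \<le> 0" by auto
  qed
  have key: "x v * exp (G v - G (tau s)) \<le> x (tau s)" if "B3 \<le> tau s" "tau s \<le> v" for s v
  proof -
    have "(x v * exp (G v - G (tau s))) * exp (G (tau s)) \<le> x (tau s) * exp (G (tau s))"
      using step3[OF that] by (simp add: exp_diff mult.assoc)
    then show ?thesis by (simp add: mult_le_cancel_right)
  qed
  obtain B4 where B4: "B4 \<ge> B3 + 1" "\<And>t. t \<ge> B4 \<Longrightarrow> tau t \<ge> B3" using lvl[OF tau_lim] by blast
  obtain B5 where B5: "B5 \<ge> B4 + 1" "\<And>t. t \<ge> B5 \<Longrightarrow> tau t \<ge> B4 + 1" using lvl[OF tau_lim] by blast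
  have bound: "integral {sigma t..t}
                 (\<lambda>s. p s * exp (integral {tau s..sigma t}
                    (\<lambda>\<xi>. p \<xi> * exp (integral {tau \<xi>..\<xi>} p)))) \<le> 1" if t: "t \<ge> B5" for t
  proof -
    define c where "c = sigma t"
    have tt0: "t \<ge> t0" using t B5 B4 B3 B2 B a_facts by auto
    have c: "c \<ge> B4 + 1" "c \<le> t" using sigma_bounds[OF tt0] B5(2)[OF t] unfolding c_def by auto
    define r where "r s = p s * exp (G c - G (tau s))" for s
    have tauB4: "continuous_on {B4..} tau" using tau_cont by (rule continuous_on_subset) (use B4 B3 B2 B a_facts in auto)
    have GB3: "continuous_on {B3..} G" using Gcont by (rule continuous_on_subset) (use B3 in auto)
    have GtauB4: "continuous_on {B4..} (\<lambda>u. G (tau u))"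
      by (rule continuous_on_compose2[OF GB3 tauB4]) (use B4 in auto)
    have pB4: "continuous_on {B4..} p" using p_cont by (rule continuous_on_subset) (use B4 B3 B2 B a_facts in auto)
    have rcont: "continuous_on {B4..} r" unfolding r_def by (intro continuous_intros pB4 GtauB4)
    define R where "R u = integral {B4..u} r" for u
    define \<Phi> where "\<Phi> u = x u + x c * R u" for u
    have "\<Phi> t \<le> \<Phi> c"
    proof (rule DERIV_nonpos_imp_nonincreasing[of c t \<Phi>, OF c(2)])
      fix w assume w: "c \<le> w" "w \<le> t"
      then have wa: "w \<ge> a" "w > B4" "w \<ge> t0" using c B4 B3 B2 B a_facts by auto
      have "DERIV R w :> r w" unfolding R_def using deriv_integral[OF rcont wa(2)] .
      from DERIV_add[OF D(1)[OF wa(1)] DERIV_cmult[OF this, of "x c"]]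
      have "DERIV \<Phi> w :> x' w + x c * r w" unfolding \<Phi>_def .
      moreover have "x' w + x c * r w = p w * (x c * exp (G c - G (tau w)) - x (tau w))"
        using D(2)[OF wa(1)] unfolding r_def by (simp add: algebra_simps)
      moreover have "tau w \<le> c"
      proof -
        have "tau w \<le> sigma w" using sigma_bounds[OF wa(3)] by auto
        also have "sigma w \<le> sigma t" using mono_onD[OF sigma_mono, of w t] wa(3) w tt0 by auto
        finally show ?thesis unfolding c_def .
      qed
      then have "x c * exp (G c - G (tau w)) \<le> x (tau w)"
        using key[of w c] B4(2)[of w] wa by auto
      then have "p w * (x c * exp (G c - G (tau w)) - x (tau w)) \<le> 0"
        using D(4)[OF wa(1)] by (intro mult_nonneg_nonpos) auto
      ultimately show "\<exists>y. DERIV \<Phi> w :> y \<and> y \<le> 0" by auto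
    qed
    then have "x c * (R t - R c) \<le> x c - x t" unfolding \<Phi>_def by (simp add: algebra_simps)
    moreover have "x t > 0" "x c > 0" using D(3) c B4 B3 B2 B a_facts by auto
    ultimately have "x c * (R t - R c) \<le> x c * 1" by linarith
    then have "R t - R c \<le> 1" using \<open>x c > 0\<close> by (meson mult_le_cancel_left_pos)
    moreover have "R t - R c = integral {c..t} r"
      unfolding R_def using integral_diff[OF rcont, of c t] c B4 by auto
    moreover have "integral {c..t} r = integral {sigma t..t}
                 (\<lambda>s. p s * exp (integral {tau s..sigma t}
                    (\<lambda>\<xi>. p \<xi> * exp (integral {tau \<xi>..\<xi>} p))))"
      unfolding c_def[symmetric]
    proof (rule integral_cong)
      fix s assume s: "s \<in> {c..t}"
      then have sa: "s \<ge> B4" "s \<ge> t0" using c B4 B3 B2 B a_facts by auto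
      have "tau s \<le> sigma s" using sigma_bounds[OF sa(2)] by auto
      also have "sigma s \<le> sigma t" using mono_onD[OF sigma_mono, of s t] sa s tt0 by auto
      finally have "tau s \<le> c" unfolding c_def .
      moreover have "tau s \<ge> B" using B4(2)[OF sa(1)] B3 B2 by auto
      ultimately have "integral {tau s..c} q = G c - G (tau s)"
        unfolding G_def using integral_diff[OF qcont, of "tau s" c] by auto
      then show "r s = p s * exp (integral {tau s..c} (\<lambda>\<xi>. p \<xi> * exp (integral {tau \<xi>..\<xi>} p)))"
        unfolding r_def q_def[symmetric] by simp
    qed
    ultimately show ?thesis by simp
  qed
  have "eventually (\<lambda>t. ereal (integral {sigma t..t}
                 (\<lambda>s. p s * exp (integral {tau s..sigma t}
                    (\<lambda>\<xi>. p \<xi> * exp (integral {tau \<xi>..\<xi>} p))))) \<le> 1) at_top"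
    using bound unfolding eventually_at_top_linorder by (intro exI[of _ B5]) auto
  then have "Limsup at_top (\<lambda>t. ereal (integral {sigma t..t}
                 (\<lambda>s. p s * exp (integral {tau s..sigma t}
                    (\<lambda>\<xi>. p \<xi> * exp (integral {tau \<xi>..\<xi>} p)))))) \<le> 1"
    by (rule Limsup_bounded)
  then show False using cond by simp
qed

theorem corollary3p1:
  fixes t0 :: real and p tau sigma :: "real \<Rightarrow> real"
  assumes p_cont: "continuous_on {t0..} p"
    and p_nonneg: "\<And>t. t \<ge> t0 \<Longrightarrow> p t \<ge> 0"
    and tau_cont: "continuous_on {t0..} tau"
    and tau_nonneg: "\<And>t. t \<ge> t0 \<Longrightarrow> tau t \<ge> 0"
    and tau_le: "\<And>t. t \<ge> t0 \<Longrightarrow> tau t \<le> t"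
    and tau_lim: "filterlim tau at_top at_top"
    and sigma_cont: "continuous_on {t0..} sigma"
    and sigma_mono: "mono_on {t0..} sigma"
    and sigma_bounds: "\<And>t. t \<ge> t0 \<Longrightarrow> tau t \<le> sigma t \<and> sigma t \<le> t"
    and cond: "Limsup at_top (\<lambda>t. ereal (integral {sigma t..t}
                 (\<lambda>s. p s * exp (integral {tau s..sigma t}
                    (\<lambda>\<xi>. p \<xi> * exp (integral {tau \<xi>..\<xi>} p)))))) > 1"
  shows "\<forall>x. is_solution t0 p tau x \<longrightarrow> oscillatory x"
proof (intro allI impI)
  fix x assume sol: "is_solution t0 p tau x"
  show "oscillatory x"
  proof (rule ccontr)
    assume "\<not> oscillatory x"
    then obtain T where T: "\<And>t. t > T \<Longrightarrow> x t \<noteq> 0" unfolding oscillatory_def by auto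
    from sol obtain T0 x' where T0: "T0 \<ge> t0" "continuous_on {T0..} x"
      and der: "\<And>t. t \<ge> tau_inv t0 tau T0 \<Longrightarrow>
         (x has_real_derivative x' t) (at t within {tau_inv t0 tau T0..}) \<and> x' t + p t * x (tau t) = 0"
      unfolding is_solution_def by blast
    define A where "A = tau_inv t0 tau T0"
    define S where "S = max T T0 + 1"
    have xnz: "x t \<noteq> 0" if "t \<ge> S" for t using T that unfolding S_def by auto
    have xc: "continuous_on {S..t} x" for t using T0(2) by (rule continuous_on_subset) (auto simp: S_def)
    show False
    proof (cases "x S > 0")
      case True
      have "x t > 0" if tS: "t \<ge> S" for t
      proof (rule ccontr)
        assume "\<not> x t > 0"
        then obtain z where "S \<le> z" "z \<le> t" "x z = 0"
          using IVT2'[of x t 0 S, OF _ _ tS xc] True by force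
        then show False using xnz by auto
      qed
      then show False
        using main_pos[OF p_cont p_nonneg tau_cont tau_le tau_lim sigma_mono sigma_bounds cond, of S x A x']
          der unfolding A_def by blast
    next
      case False
      then have xS: "x S < 0" using xnz[of S] by auto
      have pos: "- x t > 0" if tS: "t \<ge> S" for t
      proof (rule ccontr)
        assume "\<not> - x t > 0"
        then obtain z where "S \<le> z" "z \<le> t" "x z = 0"
          using IVT'[of x S 0 t, OF _ _ tS xc] xS by force
        then show False using xnz by auto
      qed
      have der2: "((\<lambda>t. - x t) has_real_derivative - x' t) (at t within {A..}) \<and> - x' t + p t * (- x (tau t)) = 0"
        if "t \<ge> A" for t
        using der[of t] that unfolding A_def by (auto intro: derivative_intros simp: algebra_simps)
      show False
        using main_pos[OF p_cont p_nonneg tau_cont tau_le tau_lim sigma_mono sigma_bounds cond, of S "\<lambda>t. - x t" A "\<lambda>t. - x' t"]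
          pos der2 by blast
    qed
  qed
qed

end
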